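(* Let $n\ge1$, $p\ge2$, and let $\mathbf X\in\mathbb R^{n\times p}$ have i.i.d.\ rows $\mathcal N_p(0,\Sigma^* )$ with $\Sigma^*$ positive definite; let $\Omega^*=(\Sigma^* )^{-1}=(\omega^*_{ij})$, $\phi^*_j=1/\omega^*_{jj}$, $B^*_{ij}=\omega^*_{ij}/\omega^*_{jj}$, $S_n=\frac1n\mathbf X^\top\mathbf X$. Let $\mathscr G^*$ be the graph on $[p]$ with an edge between $i\neq j$ iff $\omega^*_{ij}\neq0$, and write $i\sim j$ if $i,j$ lie in the same connected component. For $j\in[p]$ let $\Delta^*_j$ be the diagonal $p\times p$ matrix with $$(\Delta^*_j)_{ii}=\mathbf 1(i\sim j)\prod_{1\le h<q}\frac{B^*_{v_{h+1},v_h}}{B^*_{v_h,v_{h+1}}},$$ where $(v_1=j,v_2,\dots,v_q=i)$ is any path from $j$ to $i$ in $\mathscr G^*$ (the value is independent of the path and equals $\phi^*_j/\phi^*_i$ when $i\sim j$). For $j$ in a connected component $c$ of cardinality $p_c$, define $$\hat\phi^{\rm SML}_j=\frac1{p_c}\,\mathrm{trace}\big(\Delta^*_jS_nB^*\big).$$ Then $\mathbf E\big[(\hat\phi^{\rm SML}_j-\phi^*_j)^2\big]=\dfrac{2(\phi^*_j)^2}{np_c}$.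
   Context: $[p]=\{1,\dots,p\}$; $\mathbf 1(\cdot)$ is the indicator function. A path is a sequence of distinct vertices in which consecutive vertices are joined by an edge of $\mathscr G^*$; for $i=j$ the empty product equals $1$. *)

theory Defs
  imports "HOL-Analysis.Analysis" "HOL-Probability.Probability"
begin

definition pos_def_mat :: "real^'p^'p \<Rightarrow> bool" where
  "pos_def_mat S \<longleftrightarrow> transpose S = S \<and> (\<forall>x. x \<noteq> 0 \<longrightarrow> x \<bullet> (S *v x) > 0)"

definition mvn_density :: "real^'p^'p \<Rightarrow> real^'p \<Rightarrow> real" where
  "mvn_density S x =
     exp (- (x \<bullet> (matrix_inv S *v x)) / 2) / sqrt ((2 * pi) ^ CARD('p) * det S)"

definition Omega :: "real^'p^'p \<Rightarrow> real^'p^'p" where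
  "Omega S = matrix_inv S"

definition phi :: "real^'p^'p \<Rightarrow> 'p \<Rightarrow> real" where
  "phi S j = 1 / (Omega S $ j $ j)"

definition Bmat :: "real^'p^'p \<Rightarrow> real^'p^'p" where
  "Bmat S = (\<chi> i j. Omega S $ i $ j / Omega S $ j $ j)"

definition gedge :: "real^'p^'p \<Rightarrow> 'p \<Rightarrow> 'p \<Rightarrow> bool" where
  "gedge S i j \<longleftrightarrow> i \<noteq> j \<and> Omega S $ i $ j \<noteq> 0"

definition gpath :: "real^'p^'p \<Rightarrow> 'p \<Rightarrow> 'p \<Rightarrow> 'p list \<Rightarrow> bool" where
  "gpath S a b vs \<longleftrightarrow> vs \<noteq> [] \<and> hd vs = a \<and> last vs = b \<and> distinct vs \<and>
     (\<forall>h. Suc h < length vs \<longrightarrow> gedge S (vs ! h) (vs ! Suc h))"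

definition same_comp :: "real^'p^'p \<Rightarrow> 'p \<Rightarrow> 'p \<Rightarrow> bool" where
  "same_comp S i j \<longleftrightarrow> (\<exists>vs. gpath S j i vs)"

definition path_ratio :: "real^'p^'p \<Rightarrow> 'p list \<Rightarrow> real" where
  "path_ratio S vs = (\<Prod>h<length vs - 1.
      Bmat S $ (vs ! Suc h) $ (vs ! h) / Bmat S $ (vs ! h) $ (vs ! Suc h))"

text \<open>Delta*_j (diagonal); some path from j to i is chosen (the value is path-independent).\<close>
definition Delta :: "real^'p^'p \<Rightarrow> 'p \<Rightarrow> real^'p^'p" where
  "Delta S j = (\<chi> i k. if i = k then
       (if same_comp S i j then path_ratio S (SOME vs. gpath S j i vs) else 0) else 0)"

text \<open>Sample covariance S_n = (1/n) X^T X, the rows of X being X 0, ..., X (n-1).\<close>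
definition sample_cov :: "nat \<Rightarrow> (nat \<Rightarrow> real^'p) \<Rightarrow> real^'p^'p" where
  "sample_cov n X = (\<chi> a b. (\<Sum>k<n. X k $ a * X k $ b) / real n)"

definition comp_size :: "real^'p^'p \<Rightarrow> 'p \<Rightarrow> nat" where
  "comp_size S j = card {i. same_comp S i j}"

definition phi_SML :: "real^'p^'p \<Rightarrow> nat \<Rightarrow> (nat \<Rightarrow> real^'p) \<Rightarrow> 'p \<Rightarrow> real" where
  "phi_SML S n X j = trace (Delta S j ** sample_cov n X ** Bmat S) / real (comp_size S j)"

end

theory Submission
  imports Defs
begin


lemma pd_invertible:
  fixes S :: "real^'p^'p"
  assumes "pos_def_mat S"
  shows "S ** matrix_inv S = mat 1 \<and> matrix_inv S ** S = mat 1"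
proof -
  have "\<forall>x. S *v x = 0 \<longrightarrow> x = 0"
    using assms unfolding pos_def_mat_def by (metis inner_zero_right less_irrefl)
  then have "\<exists>B. B ** S = mat 1" by (simp add: matrix_left_invertible_ker)
  then have "invertible S" by (simp add: invertible_left_inverse)
  then show ?thesis unfolding matrix_inv_def invertible_def by (rule someI_ex)
qed

lemma Omega_sym:
  fixes S :: "real^'p^'p"
  assumes "pos_def_mat S"
  shows "transpose (Omega S) = Omega S"
proof -
  have 1: "S ** Omega S = mat 1" "Omega S ** S = mat 1" using pd_invertible[OF assms] by (auto simp: Omega_def)
  have St: "transpose S = S" using assms by (simp add: pos_def_mat_def)
  have "transpose (Omega S) ** S = mat 1"
    using arg_cong[OF 1(1), of transpose] by (simp add: matrix_transpose_mul St)
  then have "transpose (Omega S) = transpose (Omega S) ** (S ** Omega S)" using 1 by simp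
  also have "\<dots> = Omega S" by (simp add: matrix_mul_assoc \<open>transpose (Omega S) ** S = mat 1\<close>)
  finally show ?thesis .
qed

lemma Omega_sym_entry:
  fixes S :: "real^'p^'p"
  assumes "pos_def_mat S"
  shows "Omega S $ a $ b = Omega S $ b $ a"
  using Omega_sym[OF assms] by (metis transpose_def vec_lambda_beta)

lemma Omega_pd:
  fixes S :: "real^'p^'p"
  assumes "pos_def_mat S"
  shows "x \<bullet> (Omega S *v x) \<ge> 0" and "x \<noteq> 0 \<Longrightarrow> x \<bullet> (Omega S *v x) > 0"
proof -
  have 1: "S ** Omega S = mat 1" "Omega S ** S = mat 1" using pd_invertible[OF assms] by (auto simp: Omega_def)
  define y where "y = Omega S *v x"
  have xy: "x = S *v y" unfolding y_def by (simp add: matrix_vector_mul_assoc 1)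
  have "Omega S *v x = y" by (simp add: y_def)
  then have e: "x \<bullet> (Omega S *v x) = y \<bullet> (S *v y)" by (simp add: xy inner_commute)
  have pd: "\<And>z. z \<noteq> 0 \<Longrightarrow> z \<bullet> (S *v z) > 0" using assms by (simp add: pos_def_mat_def)
  show "x \<bullet> (Omega S *v x) \<ge> 0" unfolding e using pd[of y] by (cases "y = 0") auto
  assume "x \<noteq> 0"
  then have "y \<noteq> 0" using xy by auto
  then show "x \<bullet> (Omega S *v x) > 0" unfolding e using pd by auto
qed

lemma quad_expand:
  fixes A :: "real^'p^'p"
  shows "x \<bullet> (A *v x) = (\<Sum>i\<in>UNIV. \<Sum>k\<in>UNIV. x$i * x$k * A$i$k)"
  by (simp add: inner_vec_def matrix_vector_mult_def sum_distrib_left mult.commute mult.left_commute)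

lemma Omega_diag_pos:
  fixes S :: "real^'p^'p"
  assumes "pos_def_mat S"
  shows "Omega S $ i $ i > 0"
proof -
  have "axis i (1::real) \<bullet> (Omega S *v axis i 1) > 0"
    using Omega_pd(2)[OF assms, of "axis i 1"] by (simp add: axis_eq_0_iff)
  moreover have "axis i (1::real) \<bullet> (Omega S *v axis i 1) = Omega S $ i $ i"
    by (simp add: matrix_vector_mult_basis inner_axis' column_def)
  ultimately show ?thesis by simp
qed



lemma same_comp_refl: "same_comp S j j"
  unfolding same_comp_def gpath_def by (rule exI[of _ "[j]"]) auto

lemma gpath_extend:
  assumes "gpath S a b vs" "gedge S b c"
  shows "\<exists>vs'. gpath S a c vs'"
proof (cases "c \<in> set vs")
  case False
  show ?thesis
  proof (rule exI[of _ "vs @ [c]"])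
    show "gpath S a c (vs @ [c])"
      unfolding gpath_def
    proof (intro conjI allI impI)
      show "distinct (vs @ [c])" using assms(1) False by (auto simp: gpath_def)
      show "hd (vs @ [c]) = a" using assms(1) by (auto simp: gpath_def)
      fix h assume h: "Suc h < length (vs @ [c])"
      show "gedge S ((vs @ [c]) ! h) ((vs @ [c]) ! Suc h)"
      proof (cases "Suc h < length vs")
        case True then show ?thesis using assms(1) by (auto simp: gpath_def nth_append)
      next
        case False
        then have "Suc h = length vs" using h by auto
        moreover have "vs ! h = b" using assms(1) \<open>Suc h = length vs\<close> unfolding gpath_def
          by (metis diff_Suc_1 last_conv_nth)
        ultimately show ?thesis using assms(2) by (auto simp: nth_append)
      qed
    qed auto
  qed
next
  case True
  then obtain k where k: "k < length vs" "vs ! k = c" by (auto simp: in_set_conv_nth)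
  show ?thesis
  proof (rule exI[of _ "take (Suc k) vs"])
    have len: "length (take (Suc k) vs) = Suc k" using k by simp
    have nth: "\<And>h. h < Suc k \<Longrightarrow> take (Suc k) vs ! h = vs ! h" by simp
    have ne: "take (Suc k) vs \<noteq> []" using len by auto
    have "hd (take (Suc k) vs) = vs ! 0" using ne by (simp add: hd_conv_nth)
    also have "\<dots> = a" using assms(1) unfolding gpath_def by (metis hd_conv_nth)
    finally have hd: "hd (take (Suc k) vs) = a" .
    have lst: "last (take (Suc k) vs) = c" using ne len k by (simp add: last_conv_nth)
    show "gpath S a c (take (Suc k) vs)"
      unfolding gpath_def
    proof (intro conjI allI impI ne hd lst)
      show "distinct (take (Suc k) vs)" using assms(1) by (simp add: gpath_def)
      fix h assume "Suc h < length (take (Suc k) vs)"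
      then have "Suc h < Suc k" "Suc h < length vs" using len k by auto
      then show "gedge S (take (Suc k) vs ! h) (take (Suc k) vs ! Suc h)"
        using assms(1) nth by (simp add: gpath_def)
    qed
  qed
qed

lemma same_comp_edge:
  assumes "same_comp S i j" "gedge S i k"
  shows "same_comp S k j"
  using assms gpath_extend unfolding same_comp_def by metis

lemma path_ratio_general:
  fixes S :: "real^'p^'p"
  assumes ps: "pos_def_mat S"
  shows "vs \<noteq> [] \<Longrightarrow> (\<forall>h. Suc h < length vs \<longrightarrow> Omega S $ (vs!h) $ (vs ! Suc h) \<noteq> 0) \<Longrightarrow>
    path_ratio S vs = Omega S $ last vs $ last vs / Omega S $ hd vs $ hd vs"
proof (induction vs)
  case Nil then show ?case by simp
next
  case (Cons v vs)
  have dpos: "\<And>i. Omega S $ i $ i \<noteq> 0" using Omega_diag_pos[OF ps] by (metis less_irrefl)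
  show ?case
  proof (cases "vs = []")
    case True then show ?thesis using dpos by (simp add: path_ratio_def)
  next
    case False
    then obtain u us where vs: "vs = u # us" by (cases vs) auto
    have IH: "path_ratio S vs = Omega S $ last vs $ last vs / Omega S $ hd vs $ hd vs"
      using Cons.IH False Cons.prems(2) by (metis Suc_less_eq length_Cons nth_Cons_Suc)
    have nz: "Omega S $ v $ u \<noteq> 0" using Cons.prems(2)[rule_format, of 0] vs by simp
    have sym: "Omega S $ u $ v = Omega S $ v $ u" using Omega_sym_entry[OF ps] by blast
    have "path_ratio S (v # vs) = Bmat S $ u $ v / Bmat S $ v $ u * path_ratio S vs"
      unfolding path_ratio_def vs by (simp add: prod.lessThan_Suc_shift del: prod.lessThan_Suc)
    also have "Bmat S $ u $ v / Bmat S $ v $ u = Omega S $ u $ u / Omega S $ v $ v"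
      using nz sym dpos[of u] dpos[of v] by (simp add: Bmat_def field_simps)
    finally show ?thesis using IH vs dpos by simp
  qed
qed

lemma path_ratio_gpath:
  fixes S :: "real^'p^'p"
  assumes ps: "pos_def_mat S" and "gpath S a b vs"
  shows "path_ratio S vs = Omega S $ b $ b / Omega S $ a $ a"
  using path_ratio_general[OF ps, of vs] assms(2) unfolding gpath_def gedge_def by auto

lemma Delta_diag:
  fixes S :: "real^'p^'p"
  assumes ps: "pos_def_mat S"
  shows "Delta S j $ i $ k = (if i = k \<and> same_comp S i j then Omega S $ i $ i / Omega S $ j $ j else 0)"
proof -
  have "same_comp S i j \<Longrightarrow> path_ratio S (SOME vs. gpath S j i vs) = Omega S $ i $ i / Omega S $ j $ j"
    by (rule path_ratio_gpath[OF ps], unfold same_comp_def, rule someI_ex)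
  then show ?thesis by (auto simp add: Delta_def)
qed



definition compC :: "real^'p^'p \<Rightarrow> 'p \<Rightarrow> 'p set" where
  "compC S j = {i. same_comp S i j}"

definition qf :: "real^'p^'p \<Rightarrow> 'p \<Rightarrow> real^'p \<Rightarrow> real" where
  "qf S j x = (\<Sum>i\<in>compC S j. \<Sum>l\<in>compC S j. x$i * x$l * Omega S $ i $ l)"

definition rf :: "real^'p^'p \<Rightarrow> 'p \<Rightarrow> real^'p \<Rightarrow> real" where
  "rf S j x = (\<Sum>i\<in>-compC S j. \<Sum>l\<in>-compC S j. x$i * x$l * Omega S $ i $ l)"

lemma Omega_cross_zero:
  fixes S :: "real^'p^'p"
  assumes ps: "pos_def_mat S" and "i \<in> compC S j" "l \<notin> compC S j"
  shows "Omega S $ i $ l = 0" "Omega S $ l $ i = 0"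
proof -
  show "Omega S $ i $ l = 0"
  proof (rule ccontr)
    assume "Omega S $ i $ l \<noteq> 0"
    moreover have "i \<noteq> l" using assms by auto
    ultimately have "gedge S i l" by (simp add: gedge_def)
    then have "same_comp S l j" using same_comp_edge assms(2) by (auto simp: compC_def)
    then show False using assms(3) by (simp add: compC_def)
  qed
  then show "Omega S $ l $ i = 0" using Omega_sym_entry[OF ps] by metis
qed

lemma quad_split:
  fixes S :: "real^'p^'p"
  assumes ps: "pos_def_mat S"
  shows "x \<bullet> (Omega S *v x) = qf S j x + rf S j x"
proof -
  let ?C = "compC S j"
  let ?f = "\<lambda>i l. x$i * x$l * Omega S $ i $ l"
  have "x \<bullet> (Omega S *v x) = (\<Sum>i\<in>?C \<union> -?C. \<Sum>l\<in>UNIV. ?f i l)"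
    unfolding quad_expand by simp
  also have "\<dots> = (\<Sum>i\<in>?C. \<Sum>l\<in>UNIV. ?f i l) + (\<Sum>i\<in>-?C. \<Sum>l\<in>UNIV. ?f i l)"
    by (rule sum.union_disjoint) auto
  also have "(\<Sum>i\<in>?C. \<Sum>l\<in>UNIV. ?f i l) = (\<Sum>i\<in>?C. \<Sum>l\<in>?C. ?f i l)"
    by (intro sum.cong refl sum.mono_neutral_right) (auto simp: Omega_cross_zero[OF ps])
  also have "(\<Sum>i\<in>-?C. \<Sum>l\<in>UNIV. ?f i l) = (\<Sum>i\<in>-?C. \<Sum>l\<in>-?C. ?f i l)"
    by (intro sum.cong refl sum.mono_neutral_right) (auto simp: Omega_cross_zero[OF ps])
  finally show ?thesis by (simp add: qf_def rf_def)
qed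

lemma qf_nonneg:
  fixes S :: "real^'p^'p"
  assumes ps: "pos_def_mat S"
  shows "qf S j x \<ge> 0"
proof -
  define y where "y = (\<chi> i. if i \<in> compC S j then x$i else 0)"
  have "y \<bullet> (Omega S *v y) = (\<Sum>i\<in>UNIV. \<Sum>l\<in>UNIV. y$i * y$l * Omega S $ i $ l)"
    by (rule quad_expand)
  also have "\<dots> = (\<Sum>i\<in>compC S j. \<Sum>l\<in>UNIV. y$i * y$l * Omega S $ i $ l)"
    by (rule sum.mono_neutral_right) (auto simp: y_def)
  also have "\<dots> = qf S j x"
    unfolding qf_def
  proof (rule sum.cong[OF refl])
    fix i assume i: "i \<in> compC S j"
    have "(\<Sum>l\<in>UNIV. y$i * y$l * Omega S $ i $ l) = (\<Sum>l\<in>compC S j. y$i * y$l * Omega S $ i $ l)"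
      by (rule sum.mono_neutral_right) (auto simp: y_def)
    then show "(\<Sum>l\<in>UNIV. y$i * y$l * Omega S $ i $ l) = (\<Sum>l\<in>compC S j. x$i * x$l * Omega S $ i $ l)"
      using i by (simp add: y_def)
  qed
  finally show ?thesis using Omega_pd(1)[OF ps, of y] by simp
qed

lemma phi_SML_eq:
  fixes S :: "real^'p^'p"
  assumes ps: "pos_def_mat S"
  shows "phi_SML S n X j = phi S j / (real (comp_size S j) * real n) * (\<Sum>m<n. qf S j (X m))"
proof -
  let ?C = "compC S j"
  let ?O = "Omega S"
  have dpos: "?O $ j $ j > 0" using Omega_diag_pos[OF ps] .
  have diag: "(Delta S j ** sample_cov n X ** Bmat S) $ i $ i =
      (if i \<in> ?C then (\<Sum>l\<in>?C. sample_cov n X $ i $ l * ?O $ l $ i) / ?O $ j $ j else 0)" for i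
  proof -
    have "(Delta S j ** sample_cov n X ** Bmat S) $ i $ i =
        (\<Sum>l\<in>UNIV. (\<Sum>m\<in>UNIV. Delta S j $ i $ m * sample_cov n X $ m $ l) * Bmat S $ l $ i)"
      by (simp add: matrix_matrix_mult_def)
    also have "\<dots> = (\<Sum>l\<in>UNIV. Delta S j $ i $ i * sample_cov n X $ i $ l * Bmat S $ l $ i)"
      by (intro sum.cong refl) (simp add: Delta_diag[OF ps] if_distrib if_distribR sum.delta cong: if_cong)
    also have "\<dots> = (if i \<in> ?C then (\<Sum>l\<in>UNIV. sample_cov n X $ i $ l * ?O $ l $ i) / ?O $ j $ j else 0)"
      using Omega_diag_pos[OF ps, of i]
      by (auto simp: Delta_diag[OF ps] Bmat_def compC_def sum_divide_distrib intro!: sum.cong)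
    also have "\<dots> = (if i \<in> ?C then (\<Sum>l\<in>?C. sample_cov n X $ i $ l * ?O $ l $ i) / ?O $ j $ j else 0)"
      by (auto intro!: sum.mono_neutral_right simp: Omega_cross_zero[OF ps])
    finally show ?thesis .
  qed
  have "trace (Delta S j ** sample_cov n X ** Bmat S) =
      (\<Sum>i\<in>?C. (\<Sum>l\<in>?C. sample_cov n X $ i $ l * ?O $ l $ i)) / ?O $ j $ j"
    unfolding trace_def diag by (simp add: sum.If_cases sum_divide_distrib)
  also have "(\<Sum>i\<in>?C. (\<Sum>l\<in>?C. sample_cov n X $ i $ l * ?O $ l $ i)) = (\<Sum>m<n. qf S j (X m)) / real n"
  proof -
    have "(\<Sum>i\<in>?C. (\<Sum>l\<in>?C. sample_cov n X $ i $ l * ?O $ l $ i)) =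
        (\<Sum>i\<in>?C. (\<Sum>l\<in>?C. (\<Sum>m<n. X m $ i * X m $ l * ?O $ i $ l) / real n))"
    proof (intro sum.cong refl)
      fix i l
      show "sample_cov n X $ i $ l * ?O $ l $ i = (\<Sum>m<n. X m $ i * X m $ l * ?O $ i $ l) / real n"
        unfolding sample_cov_def by (simp add: Omega_sym_entry[OF ps, of l i] sum_distrib_right)
    qed
    also have "\<dots> = (\<Sum>m<n. qf S j (X m)) / real n"
      unfolding qf_def sum_divide_distrib[symmetric]
      by (simp add: sum.swap[of _ "{..<n}"])
    finally show ?thesis .
  qed
  finally show ?thesis
    unfolding phi_SML_def phi_def comp_size_def compC_def[symmetric] by (simp add: field_simps)
qed



lemma Basis_vec_range: "(Basis :: (real^'p) set) = range (\<lambda>i. axis i 1)"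
  by (auto simp: Basis_vec_def)

lemma inj_axis1: "inj (\<lambda>i::'p::finite. axis i (1::real))"
  by (auto simp: inj_def axis_eq_axis)

lemma sum_Basis_vec: "(\<Sum>b\<in>(Basis :: (real^'p) set). g b) = (\<Sum>i\<in>UNIV. g (axis i 1))"
  unfolding Basis_vec_range by (subst sum.reindex[OF inj_axis1]) simp

lemma prod_Basis_vec: "(\<Prod>b\<in>(Basis :: (real^'p) set). g b) = (\<Prod>i\<in>UNIV. g (axis i 1))"
  unfolding Basis_vec_range by (subst prod.reindex[OF inj_axis1]) simp

lemma qf_measurable[measurable]: "qf S j \<in> borel_measurable borel"
  unfolding qf_def by measurable

lemma rf_measurable[measurable]: "rf S j \<in> borel_measurable borel"
  unfolding rf_def by measurable



definition Wf :: "real^'p^'p \<Rightarrow> 'p \<Rightarrow> real^'p \<Rightarrow> ennreal" where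
  "Wf S j x = ennreal (exp (- rf S j x / 2) / sqrt ((2 * pi) ^ CARD('p) * det S))"

lemma Wf_measurable[measurable]: "Wf S j \<in> borel_measurable borel"
  unfolding Wf_def by measurable

lemma density_split:
  fixes S :: "real^'p^'p"
  assumes ps: "pos_def_mat S"
  shows "ennreal (mvn_density S x) = ennreal (exp (- qf S j x / 2)) * Wf S j x"
proof -
  have "mvn_density S x = exp (- qf S j x / 2) * (exp (- rf S j x / 2) / sqrt ((2 * pi) ^ CARD('p) * det S))"
    unfolding mvn_density_def Omega_def[symmetric] quad_split[OF ps, of x j]
    by (simp add: exp_add[symmetric] field_simps)
  then show ?thesis unfolding Wf_def by (simp add: ennreal_mult'[symmetric])
qed

lemma scale_T:
  fixes x :: "real^'p" and C :: "'p set"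
  shows "(\<Sum>b\<in>Basis. ((if b \<in> (\<lambda>i. axis i 1) ` C then c else 1) * (x \<bullet> b)) *\<^sub>R b)
     = (\<chi> i. if i \<in> C then c * x$i else x$i)"
proof -
  have cf: "(axis i 1 \<in> (\<lambda>i. axis i (1::real)) ` C) = (i \<in> C)" for i :: 'p
    using inj_axis1 by (auto simp: inj_def)
  show ?thesis
    unfolding sum_Basis_vec cf
  proof (subst vec_eq_iff, intro allI)
    fix k
    have "(\<Sum>i\<in>UNIV. ((if i \<in> C then c else 1) * (x \<bullet> axis i 1)) *\<^sub>R axis i (1::real)) $ k
        = (\<Sum>i\<in>UNIV. ((if i \<in> C then c else 1) * (x \<bullet> axis i 1)) * (axis i (1::real) $ k))"
      by simp
    also have "\<dots> = (\<Sum>i\<in>UNIV. if i = k then (if i \<in> C then c else 1) * x $ i else 0)"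
    proof (intro sum.cong refl)
      fix i
      have 1: "x \<bullet> axis i (1::real) = x $ i" by (simp add: inner_axis)
      have 2: "axis i (1::real) $ k = (if k = i then 1 else 0)" by (simp add: axis_def)
      show "((if i \<in> C then c else 1) * (x \<bullet> axis i 1)) * (axis i (1::real) $ k) =
        (if i = k then (if i \<in> C then c else 1) * x $ i else 0)" unfolding 1 2 by auto
    qed
    also have "\<dots> = (if k \<in> C then c * x$k else x$k)" by simp
    finally show "(\<Sum>i\<in>UNIV. ((if i \<in> C then c else 1) * (x \<bullet> axis i 1)) *\<^sub>R axis i (1::real)) $ k
        = (\<chi> i. if i \<in> C then c * x$i else x$i) $ k" by simp
  qed
qed

lemma qf_scale:
  fixes S :: "real^'p^'p"
  shows "qf S j (\<chi> i. if i \<in> compC S j then c * x$i else x$i) = c^2 * qf S j x"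
  unfolding qf_def by (simp add: sum_distrib_left power2_eq_square mult_ac)

lemma rf_scale:
  fixes S :: "real^'p^'p"
  shows "rf S j (\<chi> i. if i \<in> compC S j then c * x$i else x$i) = rf S j x"
  unfolding rf_def by simp

lemma Wf_scale:
  fixes S :: "real^'p^'p"
  shows "Wf S j (\<chi> i. if i \<in> compC S j then c * x$i else x$i) = Wf S j x"
  unfolding Wf_def rf_scale ..

lemma scaling:
  fixes S :: "real^'p^'p"
  assumes r: "r > 0" and h[measurable]: "h \<in> borel_measurable borel"
  shows "(\<integral>\<^sup>+x. ennreal (h (qf S j x)) * Wf S j x \<partial>lborel)
    = ennreal (r powr (real (card (compC S j)) / 2)) * (\<integral>\<^sup>+x. ennreal (h (r * qf S j x)) * Wf S j x \<partial>lborel)"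
proof -
  define c where "c = sqrt r"
  have c: "c > 0" "c^2 = r" using r by (auto simp: c_def)
  define cf where "cf b = (if b \<in> (\<lambda>i. axis i (1::real)) ` compC S j then c else 1)" for b :: "real^'p"
  define T where "T x = (0::real^'p) + (\<Sum>b\<in>Basis. (cf b * (x \<bullet> b)) *\<^sub>R b)" for x
  have T: "T x = (\<chi> i. if i \<in> compC S j then c * x$i else x$i)" for x
    unfolding T_def cf_def using scale_T by simp
  have lb: "lborel = density (distr lborel borel T) (\<lambda>_. (\<Prod>b\<in>Basis. \<bar>cf b\<bar>))"
    unfolding T_def by (rule lborel_affine_euclidean) (use c in \<open>auto simp: cf_def\<close>)
  have cfi: "cf (axis i 1) = (if i \<in> compC S j then c else 1)" for i
    using inj_axis1 unfolding cf_def by (auto simp: inj_def)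
  have P: "(\<Prod>b\<in>Basis. \<bar>cf b\<bar>) = r powr (real (card (compC S j)) / 2)"
  proof -
    have "(\<Prod>b\<in>Basis. \<bar>cf b\<bar>) = (\<Prod>i\<in>UNIV. if i \<in> compC S j then c else 1)"
      unfolding prod_Basis_vec cfi using c by (intro prod.cong) auto
    also have "\<dots> = c ^ card (compC S j)" by (simp add: prod.If_cases)
    also have "\<dots> = r powr (real (card (compC S j)) / 2)"
      using r by (simp add: c_def powr_half_sqrt[symmetric] powr_realpow[symmetric] powr_powr)
    finally show ?thesis .
  qed
  have Tm[measurable]: "T \<in> borel_measurable borel" unfolding T_def by measurable
  let ?f = "\<lambda>x. ennreal (h (qf S j x)) * Wf S j x"
  have "integral\<^sup>N lborel ?f = integral\<^sup>N (density (distr lborel borel T) (\<lambda>_. (\<Prod>b\<in>Basis. \<bar>cf b\<bar>))) ?f"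
    by (rule arg_cong[where f="\<lambda>M. integral\<^sup>N M ?f", OF lb])
  also have "\<dots> = (\<integral>\<^sup>+x. ennreal (\<Prod>b\<in>Basis. \<bar>cf b\<bar>) * ?f x \<partial>distr lborel borel T)"
    by (subst nn_integral_density) auto
  also have "\<dots> = (\<integral>\<^sup>+x. ennreal (\<Prod>b\<in>Basis. \<bar>cf b\<bar>) * ?f (T x) \<partial>lborel)"
    by (subst nn_integral_distr) auto
  also have "\<dots> = (\<integral>\<^sup>+x. ennreal (r powr (real (card (compC S j)) / 2)) * (ennreal (h (r * qf S j x)) * Wf S j x) \<partial>lborel)"
    unfolding P T qf_scale Wf_scale c ..
  also have "\<dots> = ennreal (r powr (real (card (compC S j)) / 2)) * (\<integral>\<^sup>+x. ennreal (h (r * qf S j x)) * Wf S j x \<partial>lborel)"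
    by (rule nn_integral_cmult) measurable
  finally show ?thesis .
qed



lemma FTC_nn:
  fixes u :: real and \<phi> \<psi> :: "real \<Rightarrow> real"
  assumes [measurable]: "\<psi> \<in> borel_measurable borel"
  and u: "u \<ge> 0" and t: "t \<ge> 1"
  and deriv: "\<And>u s. u \<ge> 0 \<Longrightarrow> s > 0 \<Longrightarrow> ((\<lambda>s. - \<phi> (s*u)) has_real_derivative (\<psi> (s*u) / s)) (at s)"
  and psinn: "\<And>u. u \<ge> 0 \<Longrightarrow> \<psi> u \<ge> 0"
  shows "(\<integral>\<^sup>+s. ennreal (\<psi> (s*u) / s) * indicator {1..t} s \<partial>lborel) = ennreal (\<phi> u - \<phi> (t*u))"
    and "\<phi> (t*u) \<le> \<phi> u"
proof -
  have d: "\<And>s. s \<in> {1..t} \<Longrightarrow> ((\<lambda>s. - \<phi> (s*u)) has_real_derivative (\<psi> (s*u) / s)) (at s)"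
    using deriv u by auto
  have nn: "\<And>s. s \<in> {1..t} \<Longrightarrow> 0 \<le> \<psi> (s*u) / s" using psinn u by auto
  have m: "(\<lambda>s. \<psi> (s*u) / s) \<in> borel_measurable borel" by measurable
  show "(\<integral>\<^sup>+s. ennreal (\<psi> (s*u) / s) * indicator {1..t} s \<partial>lborel) = ennreal (\<phi> u - \<phi> (t*u))"
    using nn_integral_FTC_Icc[OF m d nn t] by simp
  have "(\<integral>s. \<psi> (s*u) / s * indicator {1..t} s \<partial>lborel) = - \<phi> (t*u) - - \<phi> (1*u)"
    by (rule integral_FTC_Icc_nonneg[OF m d nn t])
  moreover have "(\<integral>s. \<psi> (s*u) / s * indicator {1..t} s \<partial>lborel) \<ge> 0"
    using nn by (intro Bochner_Integration.integral_nonneg) (auto simp: indicator_def)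
  ultimately show "\<phi> (t*u) \<le> \<phi> u" by simp
qed

lemma FTC_powr:
  assumes a: "a > 0" and t: "t \<ge> 1"
  shows "(\<integral>\<^sup>+s. ennreal (s powr (-a-1)) * indicator {1..t} s \<partial>lborel) = ennreal ((1 - t powr (-a)) / a)"
proof -
  have d: "\<And>s. s \<in> {1..t} \<Longrightarrow> ((\<lambda>s. - (s powr (-a)) / a) has_real_derivative (s powr (-a-1))) (at s)"
    using a by (auto intro!: derivative_eq_intros simp: field_simps powr_diff)
  have "(\<integral>\<^sup>+s. ennreal (s powr (-a-1)) * indicator {1..t} s \<partial>lborel) = ennreal (- (t powr (-a)) / a - - (1 powr (-a)) / a)"
    by (rule nn_integral_FTC_Icc[OF _ d _ t]) auto
  then show ?thesis by (simp add: diff_divide_distrib)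
qed



lemma moment_step:
  fixes q :: "'a::euclidean_space \<Rightarrow> real" and W :: "'a \<Rightarrow> ennreal" and \<phi> \<psi> :: "real \<Rightarrow> real"
  assumes [measurable]: "q \<in> borel_measurable borel" "W \<in> borel_measurable borel"
     "\<phi> \<in> borel_measurable borel" "\<psi> \<in> borel_measurable borel"
  and qnn: "\<And>x. q x \<ge> 0" and a: "a > 0"
  and scal: "\<And>r h. r > 0 \<Longrightarrow> h \<in> borel_measurable borel \<Longrightarrow>
      (\<integral>\<^sup>+x. ennreal (h (q x)) * W x \<partial>lborel) = ennreal (r powr a) * (\<integral>\<^sup>+x. ennreal (h (r * q x)) * W x \<partial>lborel)"
  and deriv: "\<And>u s. u \<ge> 0 \<Longrightarrow> s > 0 \<Longrightarrow> ((\<lambda>s. - \<phi> (s*u)) has_real_derivative (\<psi> (s*u) / s)) (at s)"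
  and psinn: "\<And>u. u \<ge> 0 \<Longrightarrow> \<psi> u \<ge> 0"
  and phinn: "\<And>u. u \<ge> 0 \<Longrightarrow> \<phi> u \<ge> 0"
  and fin: "(\<integral>\<^sup>+x. ennreal (\<phi> (q x)) * W x \<partial>lborel) < \<infinity>"
  shows "(\<integral>\<^sup>+x. ennreal (\<psi> (q x)) * W x \<partial>lborel) = ennreal a * (\<integral>\<^sup>+x. ennreal (\<phi> (q x)) * W x \<partial>lborel)"
proof -
  define G\<phi> where "G\<phi> = (\<integral>\<^sup>+x. ennreal (\<phi> (q x)) * W x \<partial>lborel)"
  define G\<psi> where "G\<psi> = (\<integral>\<^sup>+x. ennreal (\<psi> (q x)) * W x \<partial>lborel)"
  define G2 where "G2 = (\<integral>\<^sup>+x. ennreal (\<phi> (2 * q x)) * W x \<partial>lborel)"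
  define \<kappa> where "\<kappa> = (1 - 2 powr (-a)) / a"
  have e1: "G\<phi> = ennreal (2 powr a) * G2"
    unfolding G\<phi>_def G2_def by (rule scal) auto
  define g where "g s x = ennreal (\<psi> (s * q x) / s) * indicator {1..2::real} s" for s x
  have gm[measurable]: "case_prod g \<in> borel_measurable (lborel \<Otimes>\<^sub>M lborel)"
    unfolding g_def by measurable
  have pt: "ennreal (\<phi> (q x)) = ennreal (\<phi> (2 * q x)) + (\<integral>\<^sup>+s. g s x \<partial>lborel)" for x
  proof -
    have le: "\<phi> (2 * q x) \<le> \<phi> (q x)" using FTC_nn(2)[of \<psi> "q x" 2 \<phi>] deriv psinn qnn by auto
    have "(\<integral>\<^sup>+s. g s x \<partial>lborel) = ennreal (\<phi> (q x) - \<phi> (2 * q x))"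
      unfolding g_def using FTC_nn(1)[of \<psi> "q x" 2 \<phi>] deriv psinn qnn by auto
    then show ?thesis using le phinn[of "2 * q x"] qnn[of x] by (simp add: ennreal_plus[symmetric])
  qed
  have "G\<phi> = (\<integral>\<^sup>+x. ennreal (\<phi> (2 * q x)) * W x + (\<integral>\<^sup>+s. g s x \<partial>lborel) * W x \<partial>lborel)"
    unfolding G\<phi>_def by (intro nn_integral_cong) (simp add: pt distrib_right)
  also have "\<dots> = G2 + (\<integral>\<^sup>+x. (\<integral>\<^sup>+s. g s x \<partial>lborel) * W x \<partial>lborel)"
    unfolding G2_def by (rule nn_integral_add) measurable
  also have "(\<integral>\<^sup>+x. (\<integral>\<^sup>+s. g s x \<partial>lborel) * W x \<partial>lborel) = (\<integral>\<^sup>+x. (\<integral>\<^sup>+s. g s x * W x \<partial>lborel) \<partial>lborel)"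
    by (intro nn_integral_cong nn_integral_multc[symmetric]) measurable
  also have "\<dots> = (\<integral>\<^sup>+s. (\<integral>\<^sup>+x. g s x * W x \<partial>lborel) \<partial>lborel)"
    by (rule lborel_pair.Fubini') measurable
  also have "\<dots> = (\<integral>\<^sup>+s. ennreal (s powr (-a-1)) * indicator {1..2} s * G\<psi> \<partial>lborel)"
  proof (intro nn_integral_cong)
    fix s :: real
    show "(\<integral>\<^sup>+x. g s x * W x \<partial>lborel) = ennreal (s powr (-a-1)) * indicator {1..2} s * G\<psi>"
    proof (cases "s \<in> {1..2}")
      case False then show ?thesis by (simp add: g_def)
    next
      case True
      then have s: "s > 0" by auto
      have sc: "G\<psi> = ennreal (s powr a) * (\<integral>\<^sup>+x. ennreal (\<psi> (s * q x)) * W x \<partial>lborel)"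
        unfolding G\<psi>_def using s by (rule scal) measurable
      have "(\<integral>\<^sup>+x. g s x * W x \<partial>lborel) = (\<integral>\<^sup>+x. ennreal (1/s) * (ennreal (\<psi> (s * q x)) * W x) \<partial>lborel)"
        using True s by (intro nn_integral_cong) (simp add: g_def ennreal_mult'[symmetric] mult_ac)
      also have "\<dots> = ennreal (1/s) * (\<integral>\<^sup>+x. ennreal (\<psi> (s * q x)) * W x \<partial>lborel)"
        by (rule nn_integral_cmult) measurable
      also have "\<dots> = ennreal (1/s) * ennreal (s powr (-a)) * G\<psi>"
        unfolding sc using s
        by (simp add: mult.assoc[symmetric] ennreal_mult'[symmetric] powr_minus field_simps)
      also have "\<dots> = ennreal (s powr (-a-1)) * indicator {1..2} s * G\<psi>"
        using True s by (simp add: ennreal_mult'[symmetric] powr_diff powr_minus field_simps)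
      finally show ?thesis .
    qed
  qed
  also have "\<dots> = (\<integral>\<^sup>+s. ennreal (s powr (-a-1)) * indicator {1..2} s \<partial>lborel) * G\<psi>"
    by (rule nn_integral_multc) measurable
  also have "\<dots> = ennreal \<kappa> * G\<psi>"
    unfolding \<kappa>_def using a by (simp add: FTC_powr)
  finally have e2: "G\<phi> = G2 + ennreal \<kappa> * G\<psi>" .
  have kpos: "\<kappa> > 0" unfolding \<kappa>_def using a by (simp add: powr_minus field_simps)
  have fG: "G\<phi> < \<infinity>" using fin G\<phi>_def by simp
  obtain x where x: "x \<ge> 0" "G\<phi> = ennreal x" using fG by (cases G\<phi>) auto
  have "G2 \<le> G\<phi>" unfolding e2 by (rule add_increasing2) auto
  then have "G2 < \<infinity>" using fG by (rule le_less_trans)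
  then obtain y where y: "y \<ge> 0" "G2 = ennreal y" by (cases G2) auto
  have "ennreal \<kappa> * G\<psi> \<le> G\<phi>" unfolding e2 by (rule add_increasing) auto
  then have "ennreal \<kappa> * G\<psi> < \<infinity>" using fG by (rule le_less_trans)
  then have "G\<psi> < \<infinity>" using kpos by (cases G\<psi>) (auto simp: ennreal_mult_top)
  then obtain z where z: "z \<ge> 0" "G\<psi> = ennreal z" by (cases G\<psi>) auto
  have r1: "x = 2 powr a * y" using e1 x y by (simp add: ennreal_mult'[symmetric])
  have m1: "ennreal \<kappa> * ennreal z = ennreal (\<kappa> * z)" by (rule ennreal_mult'[symmetric]) (use kpos in auto)
  have m2: "ennreal y + ennreal (\<kappa> * z) = ennreal (y + \<kappa> * z)" by (rule ennreal_plus[symmetric]) (use y z kpos in auto)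
  have "ennreal x = ennreal (y + \<kappa> * z)" using e2 unfolding x y z m1 m2 .
  then have r2: "x = y + \<kappa> * z" using x y z kpos by (subst (asm) ennreal_inj) auto
  have "z = a * x"
  proof -
    have "y = x * 2 powr (-a)" using r1 by (simp add: powr_minus field_simps)
    then have "\<kappa> * z = x * (1 - 2 powr (-a))" using r2 by (simp add: algebra_simps)
    then have "(1 - 2 powr (-a)) * z = (1 - 2 powr (-a)) * (a * x)" using a unfolding \<kappa>_def by (simp add: field_simps)
    moreover have "1 - 2 powr (-a) > 0" using a by (simp add: powr_minus field_simps)
    ultimately show ?thesis using a by auto
  qed
  then show ?thesis unfolding G\<psi>_def[symmetric] G\<phi>_def[symmetric] using x z a by (simp add: ennreal_mult')
qed



lemma compC_card_pos: "card (compC S j) > 0"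
  using same_comp_refl[of S j] by (auto simp: compC_def card_gt_0_iff)

lemma num_ennreal: "0 \<le> y \<Longrightarrow> (numeral k::ennreal) * ennreal y = ennreal (numeral k * y)"
  by (simp add: ennreal_mult)

lemma gauss_nn:
  fixes S :: "real^'p^'p" and Y :: "'w \<Rightarrow> real^'p"
  assumes ps: "pos_def_mat S" and D: "distributed M lborel Y (\<lambda>x. ennreal (mvn_density S x))"
    and h[measurable]: "h \<in> borel_measurable borel"
  shows "(\<integral>\<^sup>+\<omega>. ennreal (h (qf S j (Y \<omega>))) \<partial>M) =
      (\<integral>\<^sup>+x. ennreal (exp (- qf S j x / 2) * h (qf S j x)) * Wf S j x \<partial>lborel)"
proof -
  have "(\<integral>\<^sup>+\<omega>. ennreal (h (qf S j (Y \<omega>))) \<partial>M) = (\<integral>\<^sup>+x. ennreal (mvn_density S x) * ennreal (h (qf S j x)) \<partial>lborel)"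
    by (rule distributed_nn_integral[OF D, symmetric]) measurable
  also have "\<dots> = (\<integral>\<^sup>+x. ennreal (exp (- qf S j x / 2) * h (qf S j x)) * Wf S j x \<partial>lborel)"
    by (intro nn_integral_cong) (simp add: density_split[OF ps, of _ j] ennreal_mult'' mult_ac)
  finally show ?thesis .
qed

lemma gauss_moments_nn:
  fixes S :: "real^'p^'p" and Y :: "'w \<Rightarrow> real^'p"
  assumes ps: "pos_def_mat S" and P: "prob_space M"
    and D: "distributed M lborel Y (\<lambda>x. ennreal (mvn_density S x))"
  shows "(\<integral>\<^sup>+\<omega>. ennreal (qf S j (Y \<omega>)) \<partial>M) = ennreal (real (card (compC S j)))"
    and "(\<integral>\<^sup>+\<omega>. ennreal ((qf S j (Y \<omega>))^2) \<partial>M) = ennreal (real (card (compC S j)) * (real (card (compC S j)) + 2))"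
proof -
  define a where "a = real (card (compC S j)) / 2"
  have a: "a > 0" unfolding a_def using compC_card_pos[of S j] by simp
  let ?G = "\<lambda>h. (\<integral>\<^sup>+x. ennreal (h (qf S j x)) * Wf S j x \<partial>lborel)"
  have scal: "\<And>r h. r > 0 \<Longrightarrow> h \<in> borel_measurable borel \<Longrightarrow> ?G h = ennreal (r powr a) * (\<integral>\<^sup>+x. ennreal (h (r * qf S j x)) * Wf S j x \<partial>lborel)"
    unfolding a_def by (rule scaling)
  have qnn: "\<And>x. qf S j x \<ge> 0" by (rule qf_nonneg[OF ps])
  have K: "?G (\<lambda>u. exp (- u / 2)) = 1"
  proof -
    have "?G (\<lambda>u. exp (- u / 2)) = (\<integral>\<^sup>+\<omega>. ennreal 1 \<partial>M)"
      using gauss_nn[OF ps D, of "\<lambda>_. 1" j] by simp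
    also have "\<dots> = 1" using P by (simp add: prob_space.emeasure_space_1)
    finally show ?thesis .
  qed
  have d1: "\<And>u s. u \<ge> 0 \<Longrightarrow> s > 0 \<Longrightarrow> ((\<lambda>s. - exp (- (s*u) / 2)) has_real_derivative ((s*u) / 2 * exp (- (s*u) / 2) / s)) (at s)"
    by (rule derivative_eq_intros refl | simp add: field_simps)+
  have G1: "?G (\<lambda>u. u / 2 * exp (- u / 2)) = ennreal a"
  proof -
    have "?G (\<lambda>u. u / 2 * exp (- u / 2)) = ennreal a * ?G (\<lambda>u. exp (- u / 2))"
      by (rule moment_step[OF _ _ _ _ qnn a scal d1]) (use K in simp_all)
    then show ?thesis using K by simp
  qed
  have d2: "\<And>u s. u \<ge> 0 \<Longrightarrow> s > 0 \<Longrightarrow> ((\<lambda>s. - (exp (- (s*u) / 2) * (1 + (s*u) / 2))) has_real_derivative ((s*u / 2)^2 * exp (- (s*u) / 2) / s)) (at s)"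
    by (rule derivative_eq_intros refl | simp add: field_simps power2_eq_square)+
  have split: "?G (\<lambda>u. exp (- u / 2) * (1 + u / 2)) = ?G (\<lambda>u. exp (- u / 2)) + ?G (\<lambda>u. u / 2 * exp (- u / 2))"
  proof -
    have "?G (\<lambda>u. exp (- u / 2) * (1 + u / 2)) = (\<integral>\<^sup>+x. ennreal (exp (- qf S j x / 2)) * Wf S j x + ennreal (qf S j x / 2 * exp (- qf S j x / 2)) * Wf S j x \<partial>lborel)"
    proof (intro nn_integral_cong)
      fix x
      have "exp (- qf S j x / 2) * (1 + qf S j x / 2) = exp (- qf S j x / 2) + qf S j x / 2 * exp (- qf S j x / 2)"
        by (simp add: algebra_simps)
      then have "ennreal (exp (- qf S j x / 2) * (1 + qf S j x / 2)) = ennreal (exp (- qf S j x / 2)) + ennreal (qf S j x / 2 * exp (- qf S j x / 2))"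
        using qnn[of x] by (simp add: ennreal_plus)
      then show "ennreal (exp (- qf S j x / 2) * (1 + qf S j x / 2)) * Wf S j x = ennreal (exp (- qf S j x / 2)) * Wf S j x + ennreal (qf S j x / 2 * exp (- qf S j x / 2)) * Wf S j x"
        by (simp add: distrib_right)
    qed
    also have "\<dots> = ?G (\<lambda>u. exp (- u / 2)) + ?G (\<lambda>u. u / 2 * exp (- u / 2))"
      by (rule nn_integral_add) measurable
    finally show ?thesis .
  qed
  have G2: "?G (\<lambda>u. (u / 2)^2 * exp (- u / 2)) = ennreal (a * (1 + a))"
  proof -
    have "?G (\<lambda>u. (u / 2)^2 * exp (- u / 2)) = ennreal a * ?G (\<lambda>u. exp (- u / 2) * (1 + u / 2))"
      by (rule moment_step[OF _ _ _ _ qnn a scal d2]) (use split K G1 in simp_all)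
    also have "\<dots> = ennreal a * ennreal (1 + a)" unfolding split K G1 using a
      by (simp add: ennreal_plus[of 1 a])
    also have "\<dots> = ennreal (a * (1 + a))" using a by (simp add: ennreal_mult')
    finally show ?thesis .
  qed
  have "(\<integral>\<^sup>+\<omega>. ennreal (qf S j (Y \<omega>)) \<partial>M) = (\<integral>\<^sup>+x. ennreal (2 * (qf S j x / 2 * exp (- qf S j x / 2))) * Wf S j x \<partial>lborel)"
    using gauss_nn[OF ps D, of "\<lambda>u. u" j] by (simp add: mult_ac)
  also have "\<dots> = 2 * ?G (\<lambda>u. u / 2 * exp (- u / 2))"
  proof -
    have "(\<integral>\<^sup>+x. ennreal (2 * (qf S j x / 2 * exp (- qf S j x / 2))) * Wf S j x \<partial>lborel) = (\<integral>\<^sup>+x. 2 * (ennreal (qf S j x / 2 * exp (- qf S j x / 2)) * Wf S j x) \<partial>lborel)"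
    proof (intro nn_integral_cong)
      fix x
      have "ennreal (2 * (qf S j x / 2 * exp (- qf S j x / 2))) = ennreal 2 * ennreal (qf S j x / 2 * exp (- qf S j x / 2))"
        by (rule ennreal_mult) (auto simp: qnn)
      then show "ennreal (2 * (qf S j x / 2 * exp (- qf S j x / 2))) * Wf S j x = 2 * (ennreal (qf S j x / 2 * exp (- qf S j x / 2)) * Wf S j x)"
        by (simp only: mult.assoc ennreal_numeral)
    qed
    also have "\<dots> = 2 * (\<integral>\<^sup>+x. ennreal (qf S j x / 2 * exp (- qf S j x / 2)) * Wf S j x \<partial>lborel)"
      by (rule nn_integral_cmult) measurable
    finally show ?thesis by simp
  qed
  finally show "(\<integral>\<^sup>+\<omega>. ennreal (qf S j (Y \<omega>)) \<partial>M) = ennreal (real (card (compC S j)))"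
    unfolding G1 using a by (simp add: num_ennreal a_def)
  have "(\<integral>\<^sup>+\<omega>. ennreal ((qf S j (Y \<omega>))^2) \<partial>M) = (\<integral>\<^sup>+x. ennreal (4 * ((qf S j x / 2)^2 * exp (- qf S j x / 2))) * Wf S j x \<partial>lborel)"
    using gauss_nn[OF ps D, of "\<lambda>u. u^2" j] by (simp add: mult_ac power2_eq_square)
  also have "\<dots> = 4 * ?G (\<lambda>u. (u / 2)^2 * exp (- u / 2))"
  proof -
    have "(\<integral>\<^sup>+x. ennreal (4 * ((qf S j x / 2)^2 * exp (- qf S j x / 2))) * Wf S j x \<partial>lborel) = (\<integral>\<^sup>+x. 4 * (ennreal ((qf S j x / 2)^2 * exp (- qf S j x / 2)) * Wf S j x) \<partial>lborel)"
    proof (intro nn_integral_cong)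
      fix x
      have "ennreal (4 * ((qf S j x / 2)^2 * exp (- qf S j x / 2))) = ennreal 4 * ennreal ((qf S j x / 2)^2 * exp (- qf S j x / 2))"
        by (rule ennreal_mult) (auto simp: qnn)
      then show "ennreal (4 * ((qf S j x / 2)^2 * exp (- qf S j x / 2))) * Wf S j x = 4 * (ennreal ((qf S j x / 2)^2 * exp (- qf S j x / 2)) * Wf S j x)"
        by (simp only: mult.assoc ennreal_numeral)
    qed
    also have "\<dots> = 4 * (\<integral>\<^sup>+x. ennreal ((qf S j x / 2)^2 * exp (- qf S j x / 2)) * Wf S j x \<partial>lborel)"
      by (rule nn_integral_cmult) measurable
    finally show ?thesis by simp
  qed
  finally have outer: "(\<integral>\<^sup>+\<omega>. ennreal ((qf S j (Y \<omega>))^2) \<partial>M) = 4 * ?G (\<lambda>u. (u / 2)^2 * exp (- u / 2))" .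
  show "(\<integral>\<^sup>+\<omega>. ennreal ((qf S j (Y \<omega>))^2) \<partial>M) = ennreal (real (card (compC S j)) * (real (card (compC S j)) + 2))"
  proof -
    have e1: "(4::ennreal) * ennreal (a * (1 + a)) = ennreal (4 * (a * (1 + a)))"
      by (rule num_ennreal) (use a in simp)
    have e2: "4 * (a * (1 + a)) = real (card (compC S j)) * (real (card (compC S j)) + 2)"
      by (simp add: a_def field_simps)
    show ?thesis using outer unfolding G2 e1 e2 .
  qed
qed



lemma hbi_const:
  assumes "prob_space M"
  shows "has_bochner_integral M (\<lambda>_. c::real) c"
proof -
  interpret prob_space M by (rule assms)
  show ?thesis by (simp add: has_bochner_integral_iff prob_space)
qed

lemma gauss_moments:
  fixes S :: "real^'p^'p" and Y :: "'w \<Rightarrow> real^'p"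
  assumes ps: "pos_def_mat S" and P: "prob_space M"
    and D: "distributed M lborel Y (\<lambda>x. ennreal (mvn_density S x))"
  shows "has_bochner_integral M (\<lambda>\<omega>. qf S j (Y \<omega>)) (real (card (compC S j)))"
    and "has_bochner_integral M (\<lambda>\<omega>. (qf S j (Y \<omega>))^2) (real (card (compC S j)) * (real (card (compC S j)) + 2))"
proof -
  have Ym[measurable]: "Y \<in> borel_measurable M" using distributed_measurable[OF D] by simp
  show "has_bochner_integral M (\<lambda>\<omega>. qf S j (Y \<omega>)) (real (card (compC S j)))"
    by (rule has_bochner_integral_nn_integral) (auto simp: qf_nonneg[OF ps] gauss_moments_nn(1)[OF ps P D])
  show "has_bochner_integral M (\<lambda>\<omega>. (qf S j (Y \<omega>))^2) (real (card (compC S j)) * (real (card (compC S j)) + 2))"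
    by (rule has_bochner_integral_nn_integral) (auto simp: gauss_moments_nn(2)[OF ps P D])
qed

theorem mainTheorem6:
  fixes M :: "'w measure" and X :: "nat \<Rightarrow> 'w \<Rightarrow> real^'p"
    and Sigma :: "real^'p^'p" and n :: nat and j :: 'p
  assumes "n \<ge> 1" and "CARD('p) \<ge> 2"
    and "prob_space M"
    and "pos_def_mat Sigma"
    and "prob_space.indep_vars M (\<lambda>_. borel) X {..<n}"
    and "\<And>k. k < n \<Longrightarrow> distributed M lborel (X k) (\<lambda>x. ennreal (mvn_density Sigma x))"
  shows "(\<integral>\<omega>. (phi_SML Sigma n (\<lambda>k. X k \<omega>) j - phi Sigma j)^2 \<partial>M)
           = 2 * (phi Sigma j)^2 / (real n * real (comp_size Sigma j))"
proof -
  note ps = assms(4) and P = assms(3) and D = assms(6)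
  define c where "c = real (card (compC Sigma j))"
  define \<phi> where "\<phi> = phi Sigma j"
  define Z where "Z m \<omega> = qf Sigma j (X m \<omega>) - c" for m \<omega>
  have cpos: "c > 0" unfolding c_def using compC_card_pos[of Sigma j] by simp
  have npos: "real n > 0" using assms(1) by simp
  have cs: "real (comp_size Sigma j) = c" unfolding c_def comp_size_def compC_def ..
  have Xm[measurable]: "\<And>m. m < n \<Longrightarrow> X m \<in> borel_measurable M"
    using distributed_measurable[OF D] by simp
  have hq: "\<And>m. m < n \<Longrightarrow> has_bochner_integral M (\<lambda>\<omega>. qf Sigma j (X m \<omega>)) c"
    unfolding c_def using gauss_moments(1)[OF ps P D] .
  have hq2: "\<And>m. m < n \<Longrightarrow> has_bochner_integral M (\<lambda>\<omega>. (qf Sigma j (X m \<omega>))^2) (c * (c + 2))"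
    unfolding c_def using gauss_moments(2)[OF ps P D] .
  have intZ: "\<And>m. m < n \<Longrightarrow> integrable M (Z m)" and EZ: "\<And>m. m < n \<Longrightarrow> integral\<^sup>L M (Z m) = 0"
  proof -
    fix m assume m: "m < n"
    interpret prob_space M by (rule P)
    have "has_bochner_integral M (Z m) (c - c)"
      unfolding Z_def[abs_def] by (intro has_bochner_integral_diff hq[OF m] hbi_const[OF P])
    then show "integrable M (Z m)" "integral\<^sup>L M (Z m) = 0" by (simp_all add: has_bochner_integral_iff)
  qed
  have indZ: "prob_space.indep_vars M (\<lambda>_. borel) Z {..<n}"
    unfolding Z_def[abs_def] by (rule prob_space.indep_vars_compose2[OF P assms(5)]) measurable
  have cross: "\<And>m l. m < n \<Longrightarrow> l < n \<Longrightarrow> integrable M (\<lambda>\<omega>. Z m \<omega> * Z l \<omega>) \<and>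
      integral\<^sup>L M (\<lambda>\<omega>. Z m \<omega> * Z l \<omega>) = (if m = l then 2 * c else 0)"
  proof -
    fix m l assume m: "m < n" and l: "l < n"
    interpret prob_space M by (rule P)
    show "integrable M (\<lambda>\<omega>. Z m \<omega> * Z l \<omega>) \<and> integral\<^sup>L M (\<lambda>\<omega>. Z m \<omega> * Z l \<omega>) = (if m = l then 2 * c else 0)"
    proof (cases "m = l")
      case True
      have e: "(\<lambda>\<omega>. Z m \<omega> * Z m \<omega>) = (\<lambda>\<omega>. (qf Sigma j (X m \<omega>))^2 - 2 * c * qf Sigma j (X m \<omega>) + c^2)"
        unfolding Z_def by (auto simp: power2_eq_square algebra_simps)
      have "has_bochner_integral M (\<lambda>\<omega>. Z m \<omega> * Z m \<omega>) (c * (c + 2) - 2 * c * c + c^2)"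
        unfolding e
        by (intro has_bochner_integral_add has_bochner_integral_diff hq2[OF m] has_bochner_integral_mult_right hq[OF m] hbi_const[OF P])
      moreover have "c * (c + 2) - 2 * c * c + c^2 = 2 * c" by (simp add: power2_eq_square algebra_simps)
      ultimately show ?thesis using True by (simp add: has_bochner_integral_iff)
    next
      case False
      have ind2: "indep_vars (\<lambda>_. borel) Z {m, l}"
        by (rule indep_vars_subset[OF indZ]) (use m l in auto)
      have pe: "(\<lambda>\<omega>. \<Prod>i\<in>{m, l}. Z i \<omega>) = (\<lambda>\<omega>. Z m \<omega> * Z l \<omega>)" using False by auto
      have "integrable M (\<lambda>\<omega>. \<Prod>i\<in>{m, l}. Z i \<omega>)"
        by (rule indep_vars_integrable) (use ind2 intZ m l in auto)
      moreover have "integral\<^sup>L M (\<lambda>\<omega>. \<Prod>i\<in>{m, l}. Z i \<omega>) = (\<Prod>i\<in>{m, l}. integral\<^sup>L M (Z i))"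
        by (rule indep_vars_lebesgue_integral) (use ind2 intZ m l in auto)
      ultimately show ?thesis using False EZ m l unfolding pe by simp
    qed
  qed
  have diff: "phi_SML Sigma n (\<lambda>k. X k \<omega>) j - \<phi> = \<phi> / (c * real n) * (\<Sum>m<n. Z m \<omega>)" for \<omega>
  proof -
    have "(\<Sum>m<n. Z m \<omega>) = (\<Sum>m<n. qf Sigma j (X m \<omega>)) - real n * c"
      unfolding Z_def by (simp add: sum_subtractf)
    then have hs: "(\<Sum>m<n. qf Sigma j (X m \<omega>)) = c * real n + (\<Sum>m<n. Z m \<omega>)" by simp
    show ?thesis
      unfolding phi_SML_eq[OF ps] cs \<phi>_def[symmetric] hs using cpos npos by (simp add: field_simps)
  qed
  have sq: "(phi_SML Sigma n (\<lambda>k. X k \<omega>) j - \<phi>)^2 = (\<phi> / (c * real n))^2 * (\<Sum>m<n. \<Sum>l<n. Z m \<omega> * Z l \<omega>)" for \<omega>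
    unfolding diff by (simp add: power2_eq_square sum_product algebra_simps)
  have "(\<integral>\<omega>. (phi_SML Sigma n (\<lambda>k. X k \<omega>) j - \<phi>)^2 \<partial>M) = (\<phi> / (c * real n))^2 * (\<integral>\<omega>. (\<Sum>m<n. \<Sum>l<n. Z m \<omega> * Z l \<omega>) \<partial>M)"
    unfolding sq by simp
  also have "(\<integral>\<omega>. (\<Sum>m<n. \<Sum>l<n. Z m \<omega> * Z l \<omega>) \<partial>M) = (\<Sum>m<n. \<Sum>l<n. (\<integral>\<omega>. Z m \<omega> * Z l \<omega> \<partial>M))"
  proof -
    have i: "\<And>m l. m < n \<Longrightarrow> l < n \<Longrightarrow> integrable M (\<lambda>\<omega>. Z m \<omega> * Z l \<omega>)" using cross by blast
    have "(\<integral>\<omega>. (\<Sum>m<n. \<Sum>l<n. Z m \<omega> * Z l \<omega>) \<partial>M) = (\<Sum>m<n. (\<integral>\<omega>. (\<Sum>l<n. Z m \<omega> * Z l \<omega>) \<partial>M))"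
      by (rule Bochner_Integration.integral_sum) (auto intro!: integrable_sum i)
    also have "\<dots> = (\<Sum>m<n. \<Sum>l<n. (\<integral>\<omega>. Z m \<omega> * Z l \<omega> \<partial>M))"
      by (intro sum.cong refl Bochner_Integration.integral_sum) (auto intro: i)
    finally show ?thesis .
  qed
  also have "\<dots> = (\<Sum>m<n. 2 * c)"
  proof (intro sum.cong refl)
    fix m assume m: "m \<in> {..<n}"
    have "(\<Sum>l<n. (\<integral>\<omega>. Z m \<omega> * Z l \<omega> \<partial>M)) = (\<Sum>l<n. if m = l then 2 * c else 0)"
      using cross m by (intro sum.cong) auto
    also have "\<dots> = 2 * c" using m by simp
    finally show "(\<Sum>l<n. (\<integral>\<omega>. Z m \<omega> * Z l \<omega> \<partial>M)) = 2 * c" .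
  qed
  also have "(\<phi> / (c * real n))^2 * (\<Sum>m<n. 2 * c) = 2 * \<phi>^2 / (real n * c)"
    using cpos npos by (simp add: power2_eq_square field_simps)
  finally show ?thesis unfolding \<phi>_def cs .
qed


end
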